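(* Let $\phi:Z\to[-\infty,+\infty]$ be proper and closed, and suppose Assumptions (A1) and (A2) hold for some $\lambda\in\mathbb R$. Then for every $\tau\in(0,1/\lambda^-)$ the resolvent $J_\tau:\overline{D\phi}\to D\phi$ is continuous.
   Context: $(X,\mathsf d_X)$, $(Y,\mathsf d_Y)$ complete metric spaces; $Z=X\times Y$ with $\mathsf d_Z=(\mathsf d_X^2+\mathsf d_Y^2)^{1/2}$. $D_X\phi=\{x:\phi(x,y)<+\infty\ \forall y\}$, $D_Y\phi=\{y:\phi(x,y)>-\infty\ \forall x\}$, $D\phi=D_X\phi\times D_Y\phi$; proper: $D\phi\ne\emptyset$; closed: for $x\in D_X\phi$, $y\mapsto\phi(x,y)$ upper semicontinuous, for $y\in D_Y\phi$, $x\mapsto\phi(x,y)$ lower semicontinuous. (A1): $\phi=+\infty$ on $(X\setminus D_X\phi)\times D_Y\phi$, $\phi=-\infty$ on $D_X\phi\times(Y\setminus D_Y\phi)$. $\lambda^-=\max\{-\lambda,0\}$, $1/\lambda^-:=+\infty$ if $\lambda^-=0$. $\Phi_\tau(x,y;x',y')=\phi(x',y')+\frac1{2\tau}(\mathsf d_X^2(x',x)-\mathsf d_Y^2(y',y))$. $f$ on $Z$ is $\mu$-convex-concave along curves $\gamma,\sigma$ if for all $t\in[0,1]$: $f(\gamma_t,y)\le(1-t)f(\gamma_0,y)+tf(\gamma_1,y)-\frac\mu2t(1-t)\mathsf d_X^2(\gamma_0,\gamma_1)$ for all $y$ and $f(x,\sigma_t)\ge(1-t)f(x,\sigma_0)+tf(x,\sigma_1)+\frac\mu2t(1-t)\mathsf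 d_Y^2(\sigma_0,\sigma_1)$ for all $x$. (A2) for $\lambda$: for every $(x,y)\in Z$, $(x_0,y_0),(x_1,y_1)\in D\phi$ there are continuous curves $\gamma$ from $x_0$ to $x_1$, $\sigma$ from $y_0$ to $y_1$ such that for all $\tau\in(0,1/\lambda^-)$, $(x',y')\mapsto\Phi_\tau(x,y;x',y')$ is $(\tau^{-1}+\lambda)$-convex-concave along them. A saddle point of $g:Z\to[-\infty,\infty]$ is $(x^*,y^* )$ with $g(x^*,y)\le g(x^*,y^* )\le g(x,y^* )$ for all $(x,y)$. Resolvent: for $z\in Z$ and $\tau\in(0,1/\lambda^-)$, $J_\tau z$ is the saddle point of $z'\mapsto\Phi_\tau(z;z')$; under the stated assumptions it exists, is unique and lies in $D\phi$. *)

theory Defs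
  imports "HOL-Analysis.Analysis"
begin

(* phi : Z = X x Y -> [-inf, +inf], curried as phi x y *)

definition DX :: "('a \<Rightarrow> 'b \<Rightarrow> ereal) \<Rightarrow> 'a set" where
  "DX \<phi> = {x. \<forall>y. \<phi> x y < \<infinity>}"

definition DY :: "('a \<Rightarrow> 'b \<Rightarrow> ereal) \<Rightarrow> 'b set" where
  "DY \<phi> = {y. \<forall>x. \<phi> x y > -\<infinity>}"

definition Dom :: "('a \<Rightarrow> 'b \<Rightarrow> ereal) \<Rightarrow> ('a \<times> 'b) set" where
  "Dom \<phi> = DX \<phi> \<times> DY \<phi>"

definition proper_sp :: "('a \<Rightarrow> 'b \<Rightarrow> ereal) \<Rightarrow> bool" where
  "proper_sp \<phi> \<longleftrightarrow> Dom \<phi> \<noteq> {}"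

definition lsc :: "('a::metric_space \<Rightarrow> ereal) \<Rightarrow> bool" where
  "lsc f \<longleftrightarrow> (\<forall>x s. s \<longlonglongrightarrow> x \<longrightarrow> f x \<le> liminf (\<lambda>n. f (s n)))"

definition usc :: "('a::metric_space \<Rightarrow> ereal) \<Rightarrow> bool" where
  "usc f \<longleftrightarrow> (\<forall>x s. s \<longlonglongrightarrow> x \<longrightarrow> limsup (\<lambda>n. f (s n)) \<le> f x)"

definition closed_sp :: "('a::metric_space \<Rightarrow> 'b::metric_space \<Rightarrow> ereal) \<Rightarrow> bool" where
  "closed_sp \<phi> \<longleftrightarrow> (\<forall>x\<in>DX \<phi>. usc (\<lambda>y. \<phi> x y)) \<and> (\<forall>y\<in>DY \<phi>. lsc (\<lambda>x. \<phi> x y))"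

definition A1 :: "('a \<Rightarrow> 'b \<Rightarrow> ereal) \<Rightarrow> bool" where
  "A1 \<phi> \<longleftrightarrow> (\<forall>x y. x \<notin> DX \<phi> \<and> y \<in> DY \<phi> \<longrightarrow> \<phi> x y = \<infinity>)
              \<and> (\<forall>x y. x \<in> DX \<phi> \<and> y \<notin> DY \<phi> \<longrightarrow> \<phi> x y = -\<infinity>)"

definition lam_minus :: "real \<Rightarrow> real" where
  "lam_minus lam = max (-lam) 0"

(* tau \<in> (0, 1/lambda^-), with 1/lambda^- = +inf when lambda^- = 0 *)
definition tau_adm :: "real \<Rightarrow> real \<Rightarrow> bool" where
  "tau_adm lam \<tau> \<longleftrightarrow> 0 < \<tau> \<and> (lam_minus lam = 0 \<or> \<tau> < 1 / lam_minus lam)"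

definition Phi :: "('a::metric_space \<Rightarrow> 'b::metric_space \<Rightarrow> ereal) \<Rightarrow> real \<Rightarrow> 'a \<Rightarrow> 'b \<Rightarrow> 'a \<Rightarrow> 'b \<Rightarrow> ereal" where
  "Phi \<phi> \<tau> x y x' y' = \<phi> x' y' + ereal ((dist x' x ^ 2 - dist y' y ^ 2) / (2 * \<tau>))"

definition cvx_ccv_along ::
  "('a::metric_space \<Rightarrow> 'b::metric_space \<Rightarrow> ereal) \<Rightarrow> real \<Rightarrow> (real \<Rightarrow> 'a) \<Rightarrow> (real \<Rightarrow> 'b) \<Rightarrow> bool" where
  "cvx_ccv_along f \<mu> \<gamma> \<sigma> \<longleftrightarrow>
     (\<forall>t\<in>{0..1}.
        (\<forall>y. f (\<gamma> t) y \<le> ereal (1 - t) * f (\<gamma> 0) y + ereal t * f (\<gamma> 1) y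
                       - ereal (\<mu> / 2 * t * (1 - t) * dist (\<gamma> 0) (\<gamma> 1) ^ 2))
      \<and> (\<forall>x. f x (\<sigma> t) \<ge> ereal (1 - t) * f x (\<sigma> 0) + ereal t * f x (\<sigma> 1)
                       + ereal (\<mu> / 2 * t * (1 - t) * dist (\<sigma> 0) (\<sigma> 1) ^ 2)))"

definition A2 :: "('a::metric_space \<Rightarrow> 'b::metric_space \<Rightarrow> ereal) \<Rightarrow> real \<Rightarrow> bool" where
  "A2 \<phi> lam \<longleftrightarrow>
    (\<forall>x y x0 y0 x1 y1. (x0, y0) \<in> Dom \<phi> \<longrightarrow> (x1, y1) \<in> Dom \<phi> \<longrightarrow>
      (\<exists>\<gamma> \<sigma>. continuous_on {0..1} \<gamma> \<and> \<gamma> 0 = x0 \<and> \<gamma> 1 = x1 \<and>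
             continuous_on {0..1} \<sigma> \<and> \<sigma> 0 = y0 \<and> \<sigma> 1 = y1 \<and>
             (\<forall>\<tau>. tau_adm lam \<tau> \<longrightarrow> cvx_ccv_along (Phi \<phi> \<tau> x y) (1 / \<tau> + lam) \<gamma> \<sigma>)))"

definition saddle_point :: "('a \<Rightarrow> 'b \<Rightarrow> ereal) \<Rightarrow> 'a \<Rightarrow> 'b \<Rightarrow> bool" where
  "saddle_point g xs ys \<longleftrightarrow> (\<forall>x y. g xs y \<le> g xs ys \<and> g xs ys \<le> g x ys)"

definition resolvent :: "('a::metric_space \<Rightarrow> 'b::metric_space \<Rightarrow> ereal) \<Rightarrow> real \<Rightarrow> 'a \<times> 'b \<Rightarrow> 'a \<times> 'b" where
  "resolvent \<phi> \<tau> z = (THE p. saddle_point (Phi \<phi> \<tau> (fst z) (snd z)) (fst p) (snd p))"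

end

theory Submission
  imports Defs "HOL-Analysis.Analysis"
begin

lemma tau_adm_iff: "tau_adm lam \<tau> \<longleftrightarrow> 0 < \<tau> \<and> 0 < 1/\<tau> + lam"
proof (cases "lam \<ge> 0")
  case True
  then have "lam_minus lam = 0" unfolding lam_minus_def by auto
  moreover have "0 < \<tau> \<Longrightarrow> 0 < 1/\<tau> + lam" using True
    by (metis add_pos_nonneg zero_less_divide_1_iff)
  ultimately show ?thesis unfolding tau_adm_def by auto
next
  case False
  then have lm: "lam_minus lam = - lam" unfolding lam_minus_def by auto
  have nl: "0 < -lam" using False by auto
  have "0 < \<tau> \<Longrightarrow> (\<tau> < 1 / (-lam) \<longleftrightarrow> -lam < 1/\<tau>)"
  proof -
    assume t: "0 < \<tau>"
    have e1: "\<tau> < 1 / (-lam) \<longleftrightarrow> \<tau> * (-lam) < 1" using pos_less_divide_eq[OF nl] by blast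
    have e2: "-lam < 1 / \<tau> \<longleftrightarrow> (-lam) * \<tau> < 1" using pos_less_divide_eq[OF t] by blast
    show ?thesis using e1 e2 by (simp add: mult.commute)
  qed
  then show ?thesis unfolding tau_adm_def lm using False by auto
qed

definition sub_cond :: "'m::metric_space set \<Rightarrow> ('m \<Rightarrow> real) \<Rightarrow> bool" where
  "sub_cond D F \<longleftrightarrow> (\<forall>s x B. (\<forall>n. s n \<in> D) \<longrightarrow> s \<longlonglongrightarrow> x \<longrightarrow> (\<forall>n. F (s n) \<le> B) \<longrightarrow> x \<in> D \<and> F x \<le> B)"

definition cvx_cond :: "'m::metric_space set \<Rightarrow> ('m \<Rightarrow> real) \<Rightarrow> real \<Rightarrow> bool" where
  "cvx_cond D F lam \<longleftrightarrow> (\<forall>w x0 x1. x0 \<in> D \<longrightarrow> x1 \<in> D \<longrightarrow>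
     (\<exists>\<gamma>. continuous_on {0..1} \<gamma> \<and> \<gamma> 0 = x0 \<and> \<gamma> 1 = x1 \<and> (\<forall>t\<in>{0..1}. \<gamma> t \<in> D) \<and>
       (\<forall>\<tau>. tau_adm lam \<tau> \<longrightarrow> (\<forall>t\<in>{0..1}.
          F (\<gamma> t) + (dist (\<gamma> t) w)^2 / (2*\<tau>) \<le> (1-t) * (F x0 + (dist x0 w)^2/(2*\<tau>))
            + t * (F x1 + (dist x1 w)^2/(2*\<tau>)) - (1/\<tau>+lam)/2*t*(1-t)*(dist x0 x1)^2))))"

lemma sub_condD: "sub_cond D F \<Longrightarrow> (\<forall>n. s n \<in> D) \<Longrightarrow> s \<longlonglongrightarrow> x \<Longrightarrow> (\<forall>n. F (s n) \<le> B) \<Longrightarrow> x \<in> D \<and> F x \<le> B"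
  unfolding sub_cond_def by blast

lemma sub_lim:
  assumes sc: "sub_cond D F" and sD: "\<And>n. s n \<in> D" and sx: "s \<longlonglongrightarrow> x" and cc: "c \<longlonglongrightarrow> c0"
    and bd: "\<And>n. n \<ge> N \<Longrightarrow> F (s n) + c n \<le> B"
  shows "x \<in> D \<and> F x + c0 \<le> B"
proof -
  have main: "x \<in> D \<and> F x \<le> B - c0 + e" if e: "e > 0" for e
  proof -
    from cc e have "\<forall>\<^sub>F n in sequentially. dist (c n) c0 < e" by (simp add: tendsto_iff)
    then obtain M where M: "\<And>n. n \<ge> M \<Longrightarrow> dist (c n) c0 < e" by (auto simp: eventually_sequentially)
    let ?K = "max M N"
    have h1: "\<forall>n. s (n + ?K) \<in> D" using sD by simp
    have h2: "(\<lambda>n. s (n + ?K)) \<longlonglongrightarrow> x" using LIMSEQ_ignore_initial_segment[OF sx] .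
    have h3: "\<forall>n. F (s (n + ?K)) \<le> B - c0 + e"
    proof
      fix n
      have a1: "F (s (n + ?K)) + c (n + ?K) \<le> B" by (rule bd) simp
      have "dist (c (n + ?K)) c0 < e" by (rule M) simp
      then have a2: "c0 - e < c (n + ?K)" unfolding dist_real_def by linarith
      show "F (s (n + ?K)) \<le> B - c0 + e" using a1 a2 by linarith
    qed
    show ?thesis using sub_condD[OF sc h1 h2 h3] .
  qed
  have "x \<in> D" using main[of 1] by simp
  moreover have "F x \<le> B - c0"
  proof (rule field_le_epsilon)
    fix e :: real assume "0 < e" then show "F x \<le> B - c0 + e" using main by blast
  qed
  ultimately show ?thesis by simp
qed

lemma ball_lower:
  assumes sc: "sub_cond D F" and u0: "u0 \<in> D"
  shows "\<exists>r>0. \<forall>v\<in>D. dist v u0 \<le> r \<longrightarrow> F u0 - 1 \<le> F v"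
proof (rule ccontr)
  assume "\<not> ?thesis"
  then have "\<forall>n. \<exists>v. v \<in> D \<and> dist v u0 \<le> inverse (real (Suc n)) \<and> F v < F u0 - 1"
    by (metis not_le inverse_positive_iff_positive of_nat_0_less_iff zero_less_Suc)
  then obtain v where v: "\<And>n. v n \<in> D" "\<And>n. dist (v n) u0 \<le> inverse (real (Suc n))" "\<And>n. F (v n) < F u0 - 1"
    by metis
  have "(\<lambda>n. dist (v n) u0) \<longlonglongrightarrow> 0"
    by (rule tendsto_sandwich[OF _ _ tendsto_const LIMSEQ_inverse_real_of_nat]) (use v in auto)
  then have "v \<longlonglongrightarrow> u0" using tendsto_dist_iff by blast
  then have "F u0 \<le> F u0 - 1" using sub_condD[OF sc, of v u0 "F u0 - 1"] v by (auto intro: less_imp_le)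
  then show False by auto
qed

lemma cvx_condE:
  assumes "cvx_cond D F lam" "x0 \<in> D" "x1 \<in> D"
  obtains \<gamma> where "continuous_on {0..1} \<gamma>" "\<gamma> 0 = x0" "\<gamma> 1 = x1" "\<And>t. t\<in>{0..1} \<Longrightarrow> \<gamma> t \<in> D"
    "\<And>\<tau> t. tau_adm lam \<tau> \<Longrightarrow> t\<in>{0..1} \<Longrightarrow>
          F (\<gamma> t) + (dist (\<gamma> t) w)^2 / (2*\<tau>) \<le> (1-t) * (F x0 + (dist x0 w)^2/(2*\<tau>))
            + t * (F x1 + (dist x1 w)^2/(2*\<tau>)) - (1/\<tau>+lam)/2*t*(1-t)*(dist x0 x1)^2"
  using assms unfolding cvx_cond_def by metis

lemma lower_small:
  assumes sc: "sub_cond D F" and cv: "cvx_cond D F lam" and u0: "u0 \<in> D"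
  shows "\<exists>\<tau>1. tau_adm lam \<tau>1 \<and> (\<forall>v\<in>D. F u0 - 1 \<le> F v + (dist v u0)^2/(2*\<tau>1))"
proof -
  obtain r where r: "r > 0" "\<And>v. v\<in>D \<Longrightarrow> dist v u0 \<le> r \<Longrightarrow> F u0 - 1 \<le> F v"
    using ball_lower[OF sc u0] by blast
  define \<tau>1 where "\<tau>1 = 1/(2/r^2 + \<bar>lam\<bar> + 1)"
  have pos: "0 < 2/r^2 + \<bar>lam\<bar> + 1" using r by (simp add: add_pos_nonneg)
  have t1: "0 < \<tau>1" unfolding \<tau>1_def using pos by simp
  have inv: "1/\<tau>1 = 2/r^2 + \<bar>lam\<bar> + 1" unfolding \<tau>1_def by simp
  have "0 < 2/r^2" using r by simp
  moreover have "- lam \<le> \<bar>lam\<bar>" by simp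
  ultimately have adm: "tau_adm lam \<tau>1" unfolding tau_adm_iff using t1 inv by linarith
  have big: "1 \<le> r^2/(2*\<tau>1)"
  proof -
    have "r^2/(2*\<tau>1) = r^2 * (1/\<tau>1) / 2" by simp
    also have "\<dots> = 1 + r^2 * (\<bar>lam\<bar> + 1) / 2" unfolding inv using r by (simp add: field_simps)
    finally show ?thesis by (simp add: add_nonneg_nonneg)
  qed
  have "F u0 - 1 \<le> F v + (dist v u0)^2/(2*\<tau>1)" if v: "v \<in> D" for v
  proof (cases "dist v u0 \<le> r")
    case True
    then have "F u0 - 1 \<le> F v" using r v by blast
    moreover have "0 \<le> (dist v u0)^2/(2*\<tau>1)" using t1 by simp
    ultimately show ?thesis by linarith
  next
    case False
    obtain \<gamma> where g: "continuous_on {0..1} \<gamma>" "\<gamma> 0 = u0" "\<gamma> 1 = v" "\<And>t. t\<in>{0..1} \<Longrightarrow> \<gamma> t \<in> D"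
      "\<And>\<tau> t. tau_adm lam \<tau> \<Longrightarrow> t\<in>{0..1} \<Longrightarrow>
          F (\<gamma> t) + (dist (\<gamma> t) u0)^2 / (2*\<tau>) \<le> (1-t) * (F u0 + (dist u0 u0)^2/(2*\<tau>))
            + t * (F v + (dist v u0)^2/(2*\<tau>)) - (1/\<tau>+lam)/2*t*(1-t)*(dist u0 v)^2"
      using cvx_condE[OF cv u0 v] by metis
    have cd: "continuous_on {0..1} (\<lambda>t. dist (\<gamma> t) u0)"
      by (intro continuous_on_dist g(1) continuous_on_const)
    obtain t where t: "0 \<le> t" "t \<le> 1" "dist (\<gamma> t) u0 = r"
      using IVT'[of "\<lambda>t. dist (\<gamma> t) u0" 0 r 1, OF _ _ _ cd] g(2,3) r(1) False by auto
    have tpos: "0 < t" using t g(2) r(1) by (cases "t = 0") auto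
    have tin: "t \<in> {0..1}" using t by simp
    have ineq: "F (\<gamma> t) + r^2 / (2*\<tau>1) \<le> (1-t) * F u0
            + t * (F v + (dist v u0)^2/(2*\<tau>1)) - (1/\<tau>1+lam)/2*t*(1-t)*(dist u0 v)^2"
      using g(5)[OF adm tin] t(3) by simp
    have nn: "0 \<le> (1/\<tau>1+lam)/2*t*(1-t)*(dist u0 v)^2"
      using adm t unfolding tau_adm_iff by simp
    have "F u0 - 1 \<le> F (\<gamma> t)" using r(2)[OF g(4)[OF tin]] t(3) by simp
    moreover have "(1-t) * F u0 = F u0 - t * F u0" by (simp add: algebra_simps)
    ultimately have "t * F u0 \<le> t * (F v + (dist v u0)^2/(2*\<tau>1))"
      using ineq nn big by linarith
    then have "F u0 \<le> F v + (dist v u0)^2/(2*\<tau>1)" using tpos by simp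
    then show ?thesis by linarith
  qed
  then show ?thesis using adm by blast
qed

lemma growth:
  assumes cv: "cvx_cond D F lam" and adm: "tau_adm lam \<tau>" and u: "u \<in> D"
    and mn: "\<And>v. v \<in> D \<Longrightarrow> F u + (dist u w)^2/(2*\<tau>) \<le> F v + (dist v w)^2/(2*\<tau>)"
    and v: "v \<in> D"
  shows "F u + (dist u w)^2/(2*\<tau>) + (1/\<tau>+lam)/2 * (dist u v)^2 \<le> F v + (dist v w)^2/(2*\<tau>)"
proof -
  define G where "G v = F v + (dist v w)^2/(2*\<tau>)" for v
  define c where "c = (1/\<tau>+lam)/2 * (dist u v)^2"
  have c0: "0 \<le> c" unfolding c_def using adm unfolding tau_adm_iff by simp
  obtain \<gamma> where g: "continuous_on {0..1} \<gamma>" "\<gamma> 0 = u" "\<gamma> 1 = v" "\<And>t. t\<in>{0..1} \<Longrightarrow> \<gamma> t \<in> D"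
      "\<And>\<tau> t. tau_adm lam \<tau> \<Longrightarrow> t\<in>{0..1} \<Longrightarrow>
          F (\<gamma> t) + (dist (\<gamma> t) w)^2 / (2*\<tau>) \<le> (1-t) * (F u + (dist u w)^2/(2*\<tau>))
            + t * (F v + (dist v w)^2/(2*\<tau>)) - (1/\<tau>+lam)/2*t*(1-t)*(dist u v)^2"
    using cvx_condE[OF cv u v] by metis
  have key: "G u + c - t * c \<le> G v" if t: "0 < t" "t \<le> 1" for t
  proof -
    have tin: "t \<in> {0..1}" using t by simp
    have "G (\<gamma> t) \<le> (1-t) * G u + t * G v - t * ((1-t) * c)"
      using g(5)[OF adm tin] unfolding G_def c_def by (simp add: algebra_simps)
    moreover have "G u \<le> G (\<gamma> t)" using mn[OF g(4)[OF tin]] unfolding G_def .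
    ultimately have "t * (G u + (1-t) * c) \<le> t * G v" by (simp add: algebra_simps)
    then have "G u + (1-t) * c \<le> G v" using t by simp
    then show ?thesis by (simp add: algebra_simps)
  qed
  have "G u + c \<le> G v"
  proof (rule ccontr)
    assume "\<not> ?thesis"
    then have lt: "G v < G u + c" by simp
    have "G u \<le> G v" using mn[OF v] unfolding G_def .
    then have cp: "0 < c" using lt by linarith
    define t where "t = (G u + c - G v) / (2*c)"
    have tp: "0 < t" unfolding t_def using lt cp by simp
    have tc: "2 * (t * c) = G u + c - G v" unfolding t_def using cp by (simp add: field_simps)
    have "t \<le> 1" unfolding t_def using cp \<open>G u \<le> G v\<close> by (simp add: field_simps)
    then have "G u + c - t * c \<le> G v" using key tp by blast
    then show False using lt tc by linarith
  qed
  then show ?thesis unfolding G_def c_def by simp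
qed

lemma minimizer:
  fixes D :: "'m::complete_space set"
  assumes sc: "sub_cond D F" and cv: "cvx_cond D F lam" and adm: "tau_adm lam \<tau>" and ne: "D \<noteq> {}"
    and bdd: "\<And>v. v\<in>D \<Longrightarrow> m0 \<le> F v + (dist v w)^2/(2*\<tau>)"
  shows "\<exists>u\<in>D. \<forall>v\<in>D. F u + (dist u w)^2/(2*\<tau>) \<le> F v + (dist v w)^2/(2*\<tau>)"
proof -
  define G where "G v = F v + (dist v w)^2/(2*\<tau>)" for v
  define m where "m = Inf (G ` D)"
  define \<mu> where "\<mu> = 1/\<tau> + lam"
  have mu: "0 < \<mu>" "0 < \<tau>" using adm unfolding tau_adm_iff \<mu>_def by auto
  have bb: "bdd_below (G ` D)" using bdd unfolding G_def bdd_below_def by blast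
  have mle: "m \<le> G v" if "v \<in> D" for v unfolding m_def using bb that by (simp add: cInf_lower)
  have ex: "\<exists>v\<in>D. G v < m + e" if e: "e > 0" for e
  proof (rule ccontr)
    assume "\<not> ?thesis"
    then have "\<forall>v\<in>D. m + e \<le> G v" by (simp add: not_less)
    then have "m + e \<le> m" unfolding m_def using ne by (intro cInf_greatest) auto
    then show False using e by simp
  qed
  have "\<forall>n. \<exists>v. v \<in> D \<and> G v < m + 1/(real n + 1)"
  proof
    fix n
    have "0 < 1/(real n + 1)" by simp
    then show "\<exists>v. v \<in> D \<and> G v < m + 1/(real n + 1)" using ex by blast
  qed
  then obtain s where s: "\<And>n. s n \<in> D" "\<And>n. G (s n) < m + 1/(real n + 1)" by metis
  have dd: "\<mu> * (dist (s n) (s k))^2 \<le> 4 * (1/(real n + 1)) + 4 * (1/(real k + 1))" for n k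
  proof -
    obtain \<gamma> where g: "\<And>t. t\<in>{0..1} \<Longrightarrow> \<gamma> t \<in> D"
      "\<And>\<tau> t. tau_adm lam \<tau> \<Longrightarrow> t\<in>{0..1} \<Longrightarrow>
          F (\<gamma> t) + (dist (\<gamma> t) w)^2 / (2*\<tau>) \<le> (1-t) * (F (s n) + (dist (s n) w)^2/(2*\<tau>))
            + t * (F (s k) + (dist (s k) w)^2/(2*\<tau>)) - (1/\<tau>+lam)/2*t*(1-t)*(dist (s n) (s k))^2"
      using cvx_condE[OF cv s(1) s(1), of n k w] by metis
    have h: "G (\<gamma> (1/2)) \<le> (1/2) * G (s n) + (1/2) * G (s k) - \<mu>/8 * (dist (s n) (s k))^2"
      using g(2)[OF adm, of "1/2"] unfolding G_def \<mu>_def by simp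
    have "m \<le> G (\<gamma> (1/2))" using mle g(1) by simp
    then have "\<mu> * (dist (s n) (s k))^2 \<le> 4 * (G (s n) - m) + 4 * (G (s k) - m)"
      using h by (simp add: field_simps)
    moreover have "4 * (G (s n) - m) \<le> 4 * (1/(real n + 1))" using s(2)[of n] by simp
    moreover have "4 * (G (s k) - m) \<le> 4 * (1/(real k + 1))" using s(2)[of k] by simp
    ultimately show ?thesis by linarith
  qed
  have "Cauchy s"
  proof (rule metric_CauchyI)
    fix e :: real assume e: "0 < e"
    obtain M :: nat where M: "8 / (\<mu> * e^2) < real M" using reals_Archimedean2 by blast
    have M2: "8 * (1 / (real M + 1)) < \<mu> * e^2"
    proof -
      have pe: "0 < \<mu> * e^2" using mu e by simp
      have "8 / (\<mu> * e^2) < real M + 1" using M by linarith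
      then have "8 < (real M + 1) * (\<mu> * e^2)" using pos_divide_less_eq[OF pe] by blast
      then have "8 / (real M + 1) < \<mu> * e^2"
        using pos_divide_less_eq[of "real M + 1" 8 "\<mu> * e^2"] by (simp add: mult.commute)
      then show ?thesis by simp
    qed
    show "\<exists>M. \<forall>m\<ge>M. \<forall>n\<ge>M. dist (s m) (s n) < e"
    proof (intro exI allI impI)
      fix p q assume pq: "M \<le> p" "M \<le> q"
      have "1/(real p + 1) \<le> 1/(real M + 1)" using pq by (simp add: frac_le)
      moreover have "1/(real q + 1) \<le> 1/(real M + 1)" using pq by (simp add: frac_le)
      ultimately have "\<mu> * (dist (s p) (s q))^2 < \<mu> * e^2" using dd[of p q] M2 by linarith
      then have "(dist (s p) (s q))^2 < e^2" using mu by simp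
      then show "dist (s p) (s q) < e" using e by (simp add: power_less_imp_less_base)
    qed
  qed
  then obtain u where su: "s \<longlonglongrightarrow> u" using Cauchy_convergent convergent_def by blast
  have cc: "(\<lambda>n. (dist (s n) w)^2/(2*\<tau>)) \<longlonglongrightarrow> (dist u w)^2/(2*\<tau>)"
    using mu by (intro tendsto_intros su) auto
  have main: "u \<in> D \<and> G u \<le> m + e" if e: "e > 0" for e
  proof -
    obtain N :: nat where N: "1/e < real N" using reals_Archimedean2 by blast
    have "1/e < real N + 1" using N by linarith
    then have "1 < (real N + 1) * e" using pos_divide_less_eq[OF e] by blast
    then have "1/(real N + 1) < e"
      using pos_divide_less_eq[of "real N + 1" 1 e] by (simp add: mult.commute)
    then have bd: "F (s n) + (dist (s n) w)^2/(2*\<tau>) \<le> m + e" if "n \<ge> N" for n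
    proof -
      have "1/(real n + 1) \<le> 1/(real N + 1)" using that by (simp add: frac_le)
      then show ?thesis using s(2)[of n] \<open>1/(real N + 1) < e\<close> unfolding G_def by linarith
    qed
    show ?thesis using sub_lim[OF sc s(1) su cc bd] unfolding G_def by simp
  qed
  have uD: "u \<in> D" using main[of 1] by simp
  have "G u \<le> m" by (rule field_le_epsilon) (use main in blast)
  then show ?thesis using uD mle unfolding G_def by (meson order_trans)
qed

lemma quad_lower:
  fixes \<mu> kk e :: real assumes "0 < \<mu>"
  shows "-(kk^2)/(2*\<mu>) \<le> \<mu>/2 * e^2 - kk * e"
proof -
  have "0 \<le> (\<mu> * e - kk)^2 / (2*\<mu>)" using assms by simp
  also have "(\<mu> * e - kk)^2 / (2*\<mu>) = \<mu>/2 * e^2 - kk * e + kk^2/(2*\<mu>)"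
    using assms by (simp add: field_simps power2_eq_square)
  finally show ?thesis by linarith
qed

lemma exist_min:
  fixes D :: "'m::complete_space set"
  assumes sc: "sub_cond D F" and cv: "cvx_cond D F lam" and adm: "tau_adm lam \<tau>" and ne: "D \<noteq> {}"
  shows "\<exists>u\<in>D. \<forall>v\<in>D. F u + (dist u w)^2/(2*\<tau>) + (1/\<tau>+lam)/2 * (dist u v)^2 \<le> F v + (dist v w)^2/(2*\<tau>)"
proof -
  obtain u0 where u0: "u0 \<in> D" using ne by blast
  obtain \<tau>1 where t1: "tau_adm lam \<tau>1" "\<And>v. v\<in>D \<Longrightarrow> F u0 - 1 \<le> F v + (dist v u0)^2/(2*\<tau>1)"
    using lower_small[OF sc cv u0] by blast
  obtain u1 where u1: "u1 \<in> D" "\<And>v. v\<in>D \<Longrightarrow> F u1 + (dist u1 u0)^2/(2*\<tau>1) \<le> F v + (dist v u0)^2/(2*\<tau>1)"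
    using minimizer[OF sc cv t1(1) ne t1(2)] by blast
  have gr: "F u1 + (dist u1 u0)^2/(2*\<tau>1) + (1/\<tau>1+lam)/2 * (dist u1 v)^2 \<le> F v + (dist v u0)^2/(2*\<tau>1)"
    if "v \<in> D" for v using growth[OF cv t1(1) u1(1) u1(2) that] .
  have tp1: "0 < \<tau>1" using t1(1) unfolding tau_adm_iff by simp
  have tp: "0 < \<tau>" "0 < 1/\<tau> + lam" using adm unfolding tau_adm_iff by auto
  define a where "a = dist u1 u0"
  define b where "b = dist u1 w"
  define C where "C = F u1 + a^2/(2*\<tau>1)"
  define \<mu> where "\<mu> = 1/\<tau> + lam"
  define kk where "kk = a/\<tau>1 + b/\<tau>"
  define m0 where "m0 = C - a^2/(2*\<tau>1) + b^2/(2*\<tau>) -(kk^2)/(2*\<mu>)"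
  have lb: "m0 \<le> F v + (dist v w)^2/(2*\<tau>)" if v: "v \<in> D" for v
  proof -
    define e where "e = dist u1 v"
    have e0: "0 \<le> e" unfolding e_def by simp
    have a0: "0 \<le> a" unfolding a_def by simp
    have i1: "(dist v u0)^2 \<le> (e + a)^2"
    proof -
      have "dist v u0 \<le> dist v u1 + dist u1 u0" by (rule dist_triangle)
      then have "dist v u0 \<le> e + a" unfolding e_def a_def by (simp add: dist_commute)
      then show ?thesis by (simp add: power_mono)
    qed
    have i2: "(e - b)^2 \<le> (dist v w)^2"
    proof -
      have "dist u1 v \<le> dist u1 w + dist w v" by (rule dist_triangle)
      moreover have "dist u1 w \<le> dist u1 v + dist v w" by (rule dist_triangle)
      moreover have "dist w v = dist v w" by (rule dist_commute)
      ultimately have "\<bar>e - b\<bar> \<le> dist v w" unfolding e_def b_def by linarith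
      then have "\<bar>e - b\<bar>^2 \<le> (dist v w)^2" by (intro power_mono) auto
      then show ?thesis by (simp add: power2_abs)
    qed
    have i3: "C + (1/\<tau>1+lam)/2 * e^2 - (e + a)^2/(2*\<tau>1) \<le> F v"
    proof -
      have "(dist v u0)^2/(2*\<tau>1) \<le> (e + a)^2/(2*\<tau>1)" using i1 tp1 by (simp add: divide_right_mono)
      then show ?thesis using gr[OF v] unfolding C_def e_def a_def by linarith
    qed
    have i4: "(e - b)^2/(2*\<tau>) \<le> (dist v w)^2/(2*\<tau>)" using i2 tp by (simp add: divide_right_mono)
    have alg: "C + (1/\<tau>1+lam)/2 * e^2 - (e + a)^2/(2*\<tau>1) + (e - b)^2/(2*\<tau>)
        = C - a^2/(2*\<tau>1) + b^2/(2*\<tau>) + (\<mu>/2 * e^2 - kk * e)"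
    proof -
      have q1: "(1/\<tau>1+lam)/2 * e^2 = lam/2 * e^2 + e^2/(2*\<tau>1)" by (simp add: field_simps)
      have q2: "(e + a)^2/(2*\<tau>1) = e^2/(2*\<tau>1) + e*a/\<tau>1 + a^2/(2*\<tau>1)"
        using tp1 by (simp add: field_simps power2_eq_square)
      have q3: "(e - b)^2/(2*\<tau>) = e^2/(2*\<tau>) - e*b/\<tau> + b^2/(2*\<tau>)"
        using tp by (simp add: field_simps power2_eq_square)
      have q4: "\<mu>/2 * e^2 = lam/2 * e^2 + e^2/(2*\<tau>)" unfolding \<mu>_def by (simp add: field_simps)
      have q5: "kk * e = e*a/\<tau>1 + e*b/\<tau>" unfolding kk_def by (simp add: field_simps)
      show ?thesis using q1 q2 q3 q4 q5 by linarith
    qed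
    have "-(kk^2)/(2*\<mu>) \<le> \<mu>/2 * e^2 - kk * e" using quad_lower tp unfolding \<mu>_def by blast
    then show ?thesis using i3 i4 alg unfolding m0_def by linarith
  qed
  obtain u where u: "u \<in> D" "\<And>v. v\<in>D \<Longrightarrow> F u + (dist u w)^2/(2*\<tau>) \<le> F v + (dist v w)^2/(2*\<tau>)"
    using minimizer[OF sc cv adm ne lb] by blast
  show ?thesis using growth[OF cv adm u(1) u(2)] u(1) by blast
qed

definition fr :: "('a \<Rightarrow> 'b \<Rightarrow> ereal) \<Rightarrow> 'a \<Rightarrow> 'b \<Rightarrow> real" where
  "fr \<phi> x y = real_of_ereal (\<phi> x y)"

definition PP :: "('a::metric_space \<Rightarrow> 'b::metric_space \<Rightarrow> ereal) \<Rightarrow> real \<Rightarrow> 'a \<Rightarrow> 'b \<Rightarrow> 'a \<Rightarrow> 'b \<Rightarrow> real" where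
  "PP \<phi> \<tau> x y x' y' = fr \<phi> x' y' + ((dist x' x)^2 - (dist y' y)^2)/(2*\<tau>)"

lemma PP_split: "PP \<phi> \<tau> x y x' y' = fr \<phi> x' y' + (dist x' x)^2/(2*\<tau>) - (dist y' y)^2/(2*\<tau>)"
  unfolding PP_def by (simp add: diff_divide_distrib)

locale SP =
  fixes \<phi> :: "'a::complete_space \<Rightarrow> 'b::complete_space \<Rightarrow> ereal" and lam \<tau>0 :: real
  assumes proper: "proper_sp \<phi>" and closed: "closed_sp \<phi>" and a1: "A1 \<phi>" and a2: "A2 \<phi> lam"
    and adm0: "tau_adm lam \<tau>0"
begin

lemma DXne: "DX \<phi> \<noteq> {}" and DYne: "DY \<phi> \<noteq> {}"
  using proper unfolding proper_sp_def Dom_def by auto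

lemma fin: "x \<in> DX \<phi> \<Longrightarrow> y \<in> DY \<phi> \<Longrightarrow> \<phi> x y = ereal (fr \<phi> x y)"
  unfolding fr_def DX_def DY_def by (cases "\<phi> x y") auto

lemma notDX: "x \<notin> DX \<phi> \<Longrightarrow> y \<in> DY \<phi> \<Longrightarrow> \<phi> x y = \<infinity>"
  using a1 unfolding A1_def by blast

lemma notDY: "x \<in> DX \<phi> \<Longrightarrow> y \<notin> DY \<phi> \<Longrightarrow> \<phi> x y = -\<infinity>"
  using a1 unfolding A1_def by blast

lemma Phi_eq: "x' \<in> DX \<phi> \<Longrightarrow> y' \<in> DY \<phi> \<Longrightarrow> Phi \<phi> \<tau> x y x' y' = ereal (PP \<phi> \<tau> x y x' y')"
  unfolding Phi_def PP_def using fin by simp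

lemma A2_real:
  assumes x0: "x0 \<in> DX \<phi>" and x1: "x1 \<in> DX \<phi>" and y0: "y0 \<in> DY \<phi>" and y1: "y1 \<in> DY \<phi>"
  obtains \<gamma> \<sigma> where "continuous_on {0..1} \<gamma>" "\<gamma> 0 = x0" "\<gamma> 1 = x1"
    "continuous_on {0..1} \<sigma>" "\<sigma> 0 = y0" "\<sigma> 1 = y1"
    "\<And>t. t\<in>{0..1} \<Longrightarrow> \<gamma> t \<in> DX \<phi>" "\<And>t. t\<in>{0..1} \<Longrightarrow> \<sigma> t \<in> DY \<phi>"
    "\<And>\<tau> t y'. tau_adm lam \<tau> \<Longrightarrow> t\<in>{0..1} \<Longrightarrow> y' \<in> DY \<phi> \<Longrightarrow>
       PP \<phi> \<tau> x y (\<gamma> t) y' \<le> (1-t) * PP \<phi> \<tau> x y x0 y' + t * PP \<phi> \<tau> x y x1 y'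
          - (1/\<tau>+lam)/2*t*(1-t)*(dist x0 x1)^2"
    "\<And>\<tau> t x'. tau_adm lam \<tau> \<Longrightarrow> t\<in>{0..1} \<Longrightarrow> x' \<in> DX \<phi> \<Longrightarrow>
       (1-t) * PP \<phi> \<tau> x y x' y0 + t * PP \<phi> \<tau> x y x' y1 + (1/\<tau>+lam)/2*t*(1-t)*(dist y0 y1)^2
          \<le> PP \<phi> \<tau> x y x' (\<sigma> t)"
proof -
  have "(x0, y0) \<in> Dom \<phi>" "(x1, y1) \<in> Dom \<phi>" using assms unfolding Dom_def by auto
  then obtain \<gamma> \<sigma> where g: "continuous_on {0..1} \<gamma>" "\<gamma> 0 = x0" "\<gamma> 1 = x1"
    "continuous_on {0..1} \<sigma>" "\<sigma> 0 = y0" "\<sigma> 1 = y1"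
    and cc: "\<And>\<tau>. tau_adm lam \<tau> \<Longrightarrow> cvx_ccv_along (Phi \<phi> \<tau> x y) (1/\<tau>+lam) \<gamma> \<sigma>"
    using a2 unfolding A2_def by blast
  have cx: "Phi \<phi> \<tau> x y (\<gamma> t) y' \<le> ereal (1-t) * Phi \<phi> \<tau> x y x0 y' + ereal t * Phi \<phi> \<tau> x y x1 y'
     - ereal ((1/\<tau>+lam)/2*t*(1-t)*(dist x0 x1)^2)"
    if "tau_adm lam \<tau>" "t \<in> {0..1}" for \<tau> t y'
    using cc[OF that(1)] that(2) g(2,3) unfolding cvx_ccv_along_def by blast
  have cy: "ereal (1-t) * Phi \<phi> \<tau> x y x' y0 + ereal t * Phi \<phi> \<tau> x y x' y1
     + ereal ((1/\<tau>+lam)/2*t*(1-t)*(dist y0 y1)^2) \<le> Phi \<phi> \<tau> x y x' (\<sigma> t)"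
    if "tau_adm lam \<tau>" "t \<in> {0..1}" for \<tau> t x'
    using cc[OF that(1)] that(2) g(5,6) unfolding cvx_ccv_along_def by blast
  have gD: "\<gamma> t \<in> DX \<phi>" if t: "t \<in> {0..1}" for t
  proof (rule ccontr)
    assume n: "\<gamma> t \<notin> DX \<phi>"
    have "Phi \<phi> \<tau>0 x y (\<gamma> t) y0 = \<infinity>" unfolding Phi_def using notDX[OF n y0] by simp
    then show False using cx[OF adm0 t, of y0] unfolding Phi_eq[OF x0 y0] Phi_eq[OF x1 y0] by simp
  qed
  have sD: "\<sigma> t \<in> DY \<phi>" if t: "t \<in> {0..1}" for t
  proof (rule ccontr)
    assume n: "\<sigma> t \<notin> DY \<phi>"
    have "Phi \<phi> \<tau>0 x y x0 (\<sigma> t) = -\<infinity>" unfolding Phi_def using notDY[OF x0 n] by simp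
    then show False using cy[OF adm0 t, of x0] unfolding Phi_eq[OF x0 y0] Phi_eq[OF x0 y1] by simp
  qed
  show ?thesis
  proof (rule that[OF g(1-6) gD sD])
    fix \<tau> t :: real and y' assume h: "tau_adm lam \<tau>" "t\<in>{0..1}" "y' \<in> DY \<phi>"
    show "PP \<phi> \<tau> x y (\<gamma> t) y' \<le> (1-t) * PP \<phi> \<tau> x y x0 y' + t * PP \<phi> \<tau> x y x1 y'
          - (1/\<tau>+lam)/2*t*(1-t)*(dist x0 x1)^2"
      using cx[OF h(1,2), of y'] unfolding Phi_eq[OF x0 h(3)] Phi_eq[OF x1 h(3)] Phi_eq[OF gD[OF h(2)] h(3)]
      by simp
  next
    fix \<tau> t :: real and x' assume h: "tau_adm lam \<tau>" "t\<in>{0..1}" "x' \<in> DX \<phi>"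
    show "(1-t) * PP \<phi> \<tau> x y x' y0 + t * PP \<phi> \<tau> x y x' y1 + (1/\<tau>+lam)/2*t*(1-t)*(dist y0 y1)^2
          \<le> PP \<phi> \<tau> x y x' (\<sigma> t)"
      using cy[OF h(1,2), of x'] unfolding Phi_eq[OF h(3) y0] Phi_eq[OF h(3) y1] Phi_eq[OF h(3) sD[OF h(2)]]
      by simp
  qed
qed

lemma sub_x:
  assumes y: "y \<in> DY \<phi>"
  shows "sub_cond (DX \<phi>) (\<lambda>x. fr \<phi> x y)"
  unfolding sub_cond_def
proof (intro allI impI)
  fix s x B assume s: "\<forall>n. s n \<in> DX \<phi>" and sx: "s \<longlonglongrightarrow> x" and b: "\<forall>n. fr \<phi> (s n) y \<le> B"
  have "lsc (\<lambda>x. \<phi> x y)" using closed y unfolding closed_sp_def by blast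
  then have l: "\<phi> x y \<le> liminf (\<lambda>n. \<phi> (s n) y)" using sx unfolding lsc_def by blast
  have "\<forall>n. \<phi> (s n) y \<le> ereal B" using s b fin[OF _ y] by simp
  then have "limsup (\<lambda>n. \<phi> (s n) y) \<le> ereal B" by (intro Limsup_bounded) auto
  moreover have "liminf (\<lambda>n. \<phi> (s n) y) \<le> limsup (\<lambda>n. \<phi> (s n) y)" by (rule Liminf_le_Limsup) simp
  ultimately have le: "\<phi> x y \<le> ereal B" using l by (meson order_trans)
  have xD: "x \<in> DX \<phi>"
  proof (rule ccontr)
    assume "x \<notin> DX \<phi>" then have "\<phi> x y = \<infinity>" using notDX y by blast
    then show False using le by simp
  qed
  then show "x \<in> DX \<phi> \<and> fr \<phi> x y \<le> B" using le fin[OF xD y] by simp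
qed

lemma cvx_x:
  assumes y: "y \<in> DY \<phi>"
  shows "cvx_cond (DX \<phi>) (\<lambda>x. fr \<phi> x y) lam"
  unfolding cvx_cond_def
proof (intro allI impI)
  fix w x0 x1 assume x0: "x0 \<in> DX \<phi>" and x1: "x1 \<in> DX \<phi>"
  obtain \<gamma> \<sigma> where g: "continuous_on {0..1} \<gamma>" "\<gamma> 0 = x0" "\<gamma> 1 = x1"
    "\<And>t. t\<in>{0..1} \<Longrightarrow> \<gamma> t \<in> DX \<phi>"
    "\<And>\<tau> t y'. tau_adm lam \<tau> \<Longrightarrow> t\<in>{0..1} \<Longrightarrow> y' \<in> DY \<phi> \<Longrightarrow>
       PP \<phi> \<tau> w y (\<gamma> t) y' \<le> (1-t) * PP \<phi> \<tau> w y x0 y' + t * PP \<phi> \<tau> w y x1 y'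
          - (1/\<tau>+lam)/2*t*(1-t)*(dist x0 x1)^2"
    using A2_real[OF x0 x1 y y, of w y] by metis
  show "\<exists>\<gamma>. continuous_on {0..1} \<gamma> \<and> \<gamma> 0 = x0 \<and> \<gamma> 1 = x1 \<and> (\<forall>t\<in>{0..1}. \<gamma> t \<in> DX \<phi>) \<and>
       (\<forall>\<tau>. tau_adm lam \<tau> \<longrightarrow> (\<forall>t\<in>{0..1}.
          fr \<phi> (\<gamma> t) y + (dist (\<gamma> t) w)^2 / (2*\<tau>) \<le> (1-t) * (fr \<phi> x0 y + (dist x0 w)^2/(2*\<tau>))
            + t * (fr \<phi> x1 y + (dist x1 w)^2/(2*\<tau>)) - (1/\<tau>+lam)/2*t*(1-t)*(dist x0 x1)^2))"
    using g(1-4) g(5)[OF _ _ y] unfolding PP_def by auto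
qed

end

lemma arith_neg:
  fixes t A0 A1 At Q0 Q1 Qt c :: real
  assumes "(1-t)*(A0 - Q0) + t*(A1 - Q1) + c \<le> At - Qt"
  shows "-At + Qt \<le> (1-t)*(-A0 + Q0) + t*(-A1+Q1) - c"
proof -
  have "(1-t)*(-A0+Q0) + t*(-A1+Q1) = -((1-t)*(A0-Q0) + t*(A1-Q1))" by (simp add: algebra_simps)
  then show ?thesis using assms by linarith
qed

lemma arith_g:
  fixes t P0 P1 Pt k0 k1 kt Q0 Q1 Qt E c g0 g1 :: real
  assumes h: "(1-t)*P0 + t*P1 + c \<le> Pt" and e0: "P0 = k0 - Q0 + E" and e1: "P1 = k1 - Q1 + E"
    and et: "Pt = kt - Qt + E" and t: "0 \<le> t" "t \<le> 1" and g0: "g0 \<le> k0" and g1: "g1 \<le> k1"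
  shows "-kt + Qt \<le> (1-t)*(-g0 + Q0) + t*(-g1 + Q1) - c"
proof -
  have m0: "(1-t)*g0 \<le> (1-t)*k0" using t g0 by (simp add: mult_left_mono)
  have m1: "t*g1 \<le> t*k1" using t g1 by (simp add: mult_left_mono)
  have eq1: "(1-t)*(k0 - Q0 + E) + t*(k1 - Q1 + E) = (1-t)*k0 + t*k1 - ((1-t)*Q0 + t*Q1) + E"
    by (simp add: algebra_simps)
  have eq2: "(1-t)*(-g0 + Q0) + t*(-g1 + Q1) = -((1-t)*g0) - t*g1 + ((1-t)*Q0 + t*Q1)"
    by (simp add: algebra_simps)
  show ?thesis using h e0 e1 et eq1 eq2 m0 m1 by (simp only:)
qed

lemma arith_seq:
  fixes t Pb P1 Pt S m H1 :: real
  assumes h1: "(1-t)*Pb + t*P1 \<le> Pt" and h2: "Pt \<le> S" and h3: "S + m \<le> Pb" and h4: "H1 \<le> P1"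
    and t: "0 < t" "t \<le> 1/2" and m: "0 \<le> m"
  shows "P1 \<le> S" "m \<le> 2*t*(S - H1)"
proof -
  have f1: "(1-t)*(S+m) \<le> (1-t)*Pb" using h3 t by (simp add: mult_left_mono)
  have eq: "(1-t)*(S+m) = S + m - t*S - t*m" by (simp add: algebra_simps)
  have tm: "t*m \<le> (1/2)*m" using mult_right_mono[OF t(2) m] .
  have a: "t*P1 \<le> t*S - m/2" using f1 eq tm h1 h2 by linarith
  then have "t*P1 \<le> t*S" using m by linarith
  then show "P1 \<le> S" using t by simp
  have "t*H1 \<le> t*P1" using h4 t by (simp add: mult_left_mono)
  then have q: "m/2 \<le> t*S - t*H1" using a by linarith
  have "t*(S-H1) = t*S - t*H1" by (simp add: algebra_simps)
  moreover have "2*t*(S-H1) = 2*(t*(S-H1))" by simp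
  ultimately show "m \<le> 2*t*(S - H1)" using q by linarith
qed

context SP begin

lemma cvx_y:
  assumes x: "x \<in> DX \<phi>"
  shows "cvx_cond (DY \<phi>) (\<lambda>y. - fr \<phi> x y) lam"
  unfolding cvx_cond_def
proof (intro allI impI)
  fix w y0 y1 assume y0: "y0 \<in> DY \<phi>" and y1: "y1 \<in> DY \<phi>"
  obtain \<gamma> \<sigma> where g: "continuous_on {0..1} \<sigma>" "\<sigma> 0 = y0" "\<sigma> 1 = y1"
    "\<And>t. t\<in>{0..1} \<Longrightarrow> \<sigma> t \<in> DY \<phi>"
    "\<And>\<tau> t x'. tau_adm lam \<tau> \<Longrightarrow> t\<in>{0..1} \<Longrightarrow> x' \<in> DX \<phi> \<Longrightarrow>
       (1-t) * PP \<phi> \<tau> x w x' y0 + t * PP \<phi> \<tau> x w x' y1 + (1/\<tau>+lam)/2*t*(1-t)*(dist y0 y1)^2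
          \<le> PP \<phi> \<tau> x w x' (\<sigma> t)"
    using A2_real[OF x x y0 y1, of x w] by metis
  have "- fr \<phi> x (\<sigma> t) + (dist (\<sigma> t) w)^2 / (2*\<tau>) \<le> (1-t) * (- fr \<phi> x y0 + (dist y0 w)^2/(2*\<tau>))
            + t * (- fr \<phi> x y1 + (dist y1 w)^2/(2*\<tau>)) - (1/\<tau>+lam)/2*t*(1-t)*(dist y0 y1)^2"
    if "tau_adm lam \<tau>" "t \<in> {0..1}" for \<tau> t
    by (rule arith_neg) (use g(5)[OF that x] in \<open>simp add: PP_split\<close>)
  then show "\<exists>\<sigma>. continuous_on {0..1} \<sigma> \<and> \<sigma> 0 = y0 \<and> \<sigma> 1 = y1 \<and> (\<forall>t\<in>{0..1}. \<sigma> t \<in> DY \<phi>) \<and>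
       (\<forall>\<tau>. tau_adm lam \<tau> \<longrightarrow> (\<forall>t\<in>{0..1}.
          - fr \<phi> x (\<sigma> t) + (dist (\<sigma> t) w)^2 / (2*\<tau>) \<le> (1-t) * (- fr \<phi> x y0 + (dist y0 w)^2/(2*\<tau>))
            + t * (- fr \<phi> x y1 + (dist y1 w)^2/(2*\<tau>)) - (1/\<tau>+lam)/2*t*(1-t)*(dist y0 y1)^2))"
    using g(1-4) by blast
qed

end

context SP begin

lemma exist_saddle:
  assumes adm: "tau_adm lam \<tau>"
  shows "\<exists>a b. saddle_point (Phi \<phi> \<tau> xz yz) a b"
proof -
  define \<mu> where "\<mu> = 1/\<tau> + lam"
  have tp: "0 < \<tau>" "0 < \<mu>" using adm unfolding tau_adm_iff \<mu>_def by auto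
  define k where "k x y = fr \<phi> x y + (dist x xz)^2/(2*\<tau>)" for x y
  have PPk: "PP \<phi> \<tau> xz yz x y = k x y - (dist y yz)^2/(2*\<tau>)" for x y
    unfolding k_def PP_split by simp
  have exA: "\<exists>u. u \<in> DX \<phi> \<and> (\<forall>v\<in>DX \<phi>. k u y + \<mu>/2 * (dist u v)^2 \<le> k v y)" if y: "y \<in> DY \<phi>" for y
    using exist_min[OF sub_x[OF y] cvx_x[OF y] adm DXne, of xz] unfolding k_def \<mu>_def by blast
  define A where "A y = (SOME u. u \<in> DX \<phi> \<and> (\<forall>v\<in>DX \<phi>. k u y + \<mu>/2 * (dist u v)^2 \<le> k v y))" for y
  have A: "A y \<in> DX \<phi> \<and> (\<forall>v\<in>DX \<phi>. k (A y) y + \<mu>/2 * (dist (A y) v)^2 \<le> k v y)" if "y \<in> DY \<phi>" for y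
    using someI_ex[OF exA[OF that]] unfolding A_def .
  have AD: "A y \<in> DX \<phi>" if "y \<in> DY \<phi>" for y using A[OF that] by blast
  have Agr: "k (A y) y + \<mu>/2 * (dist (A y) v)^2 \<le> k v y" if "y \<in> DY \<phi>" "v \<in> DX \<phi>" for y v
    using A[OF that(1)] that(2) by blast
  define g where "g y = k (A y) y" for y
  have gmin: "g y \<le> k v y" if "y \<in> DY \<phi>" "v \<in> DX \<phi>" for y v
  proof -
    have "0 \<le> \<mu>/2 * (dist (A y) v)^2" using tp by simp
    then show ?thesis using Agr[OF that] unfolding g_def by linarith
  qed
  obtain x0 where x0: "x0 \<in> DX \<phi>" using DXne by blast
  have cvg: "cvx_cond (DY \<phi>) (\<lambda>y. - g y) lam"
    unfolding cvx_cond_def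
  proof (intro allI impI)
    fix w y0 y1 assume y0: "y0 \<in> DY \<phi>" and y1: "y1 \<in> DY \<phi>"
    obtain \<gamma> \<sigma> where sg: "continuous_on {0..1} \<sigma>" "\<sigma> 0 = y0" "\<sigma> 1 = y1"
      "\<And>t. t\<in>{0..1} \<Longrightarrow> \<sigma> t \<in> DY \<phi>"
      "\<And>\<tau> t x'. tau_adm lam \<tau> \<Longrightarrow> t\<in>{0..1} \<Longrightarrow> x' \<in> DX \<phi> \<Longrightarrow>
         (1-t) * PP \<phi> \<tau> xz w x' y0 + t * PP \<phi> \<tau> xz w x' y1 + (1/\<tau>+lam)/2*t*(1-t)*(dist y0 y1)^2
            \<le> PP \<phi> \<tau> xz w x' (\<sigma> t)"
      using A2_real[OF x0 x0 y0 y1, of xz w] by metis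
    have "- g (\<sigma> t) + (dist (\<sigma> t) w)^2 / (2*\<tau>') \<le> (1-t) * (- g y0 + (dist y0 w)^2/(2*\<tau>'))
            + t * (- g y1 + (dist y1 w)^2/(2*\<tau>')) - (1/\<tau>'+lam)/2*t*(1-t)*(dist y0 y1)^2"
      if t': "tau_adm lam \<tau>'" and t: "t \<in> {0..1}" for \<tau>' t
    proof -
      define x'' where "x'' = A (\<sigma> t)"
      have x''D: "x'' \<in> DX \<phi>" unfolding x''_def using AD sg(4)[OF t] by blast
      define E where "E = (dist x'' xz)^2/(2*\<tau>') - (dist x'' xz)^2/(2*\<tau>)"
      have e: "PP \<phi> \<tau>' xz w x'' q = k x'' q - (dist q w)^2/(2*\<tau>') + E" for q
        unfolding PP_split k_def E_def by simp
      have "- k x'' (\<sigma> t) + (dist (\<sigma> t) w)^2 / (2*\<tau>') \<le> (1-t) * (- g y0 + (dist y0 w)^2/(2*\<tau>'))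
            + t * (- g y1 + (dist y1 w)^2/(2*\<tau>')) - (1/\<tau>'+lam)/2*t*(1-t)*(dist y0 y1)^2"
        using arith_g[OF sg(5)[OF t' t x''D] e e e] t gmin[OF y0 x''D] gmin[OF y1 x''D] by simp
      then show ?thesis unfolding g_def x''_def .
    qed
    then show "\<exists>\<sigma>. continuous_on {0..1} \<sigma> \<and> \<sigma> 0 = y0 \<and> \<sigma> 1 = y1 \<and> (\<forall>t\<in>{0..1}. \<sigma> t \<in> DY \<phi>) \<and>
       (\<forall>\<tau>. tau_adm lam \<tau> \<longrightarrow> (\<forall>t\<in>{0..1}.
          - g (\<sigma> t) + (dist (\<sigma> t) w)^2 / (2*\<tau>) \<le> (1-t) * (- g y0 + (dist y0 w)^2/(2*\<tau>))
            + t * (- g y1 + (dist y1 w)^2/(2*\<tau>)) - (1/\<tau>+lam)/2*t*(1-t)*(dist y0 y1)^2))"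
      using sg(1-4) by blast
  qed
  have subg: "sub_cond (DY \<phi>) (\<lambda>y. - g y)"
    unfolding sub_cond_def
  proof (intro allI impI)
    fix s y B assume s: "\<forall>n. s n \<in> DY \<phi>" and sy: "s \<longlonglongrightarrow> y" and bb: "\<forall>n. - g (s n) \<le> B"
    have lowb: "ereal (-B - (dist x' xz)^2/(2*\<tau>)) \<le> \<phi> x' y" if x': "x' \<in> DX \<phi>" for x'
    proof -
      have "usc (\<lambda>y. \<phi> x' y)" using closed x' unfolding closed_sp_def by blast
      then have l: "limsup (\<lambda>n. \<phi> x' (s n)) \<le> \<phi> x' y" using sy unfolding usc_def by blast
      have "ereal (-B - (dist x' xz)^2/(2*\<tau>)) \<le> \<phi> x' (s n)" for n
      proof -
        have "g (s n) \<le> k x' (s n)" using gmin s x' by blast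
        moreover have "- g (s n) \<le> B" using bb by blast
        ultimately have "-B - (dist x' xz)^2/(2*\<tau>) \<le> fr \<phi> x' (s n)" unfolding k_def by linarith
        then show ?thesis using fin[OF x'] s by simp
      qed
      then have "ereal (-B - (dist x' xz)^2/(2*\<tau>)) \<le> liminf (\<lambda>n. \<phi> x' (s n))"
        by (intro Liminf_bounded) auto
      moreover have "liminf (\<lambda>n. \<phi> x' (s n)) \<le> limsup (\<lambda>n. \<phi> x' (s n))" by (rule Liminf_le_Limsup) simp
      ultimately show ?thesis using l by (meson order_trans)
    qed
    have yD: "y \<in> DY \<phi>"
    proof (rule ccontr)
      assume "y \<notin> DY \<phi>" then have "\<phi> x0 y = -\<infinity>" using notDY x0 by blast
      then show False using lowb[OF x0] by simp
    qed
    have "ereal (-B - (dist (A y) xz)^2/(2*\<tau>)) \<le> ereal (fr \<phi> (A y) y)"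
      using lowb[OF AD[OF yD]] fin[OF AD[OF yD] yD] by simp
    then have "- g y \<le> B" unfolding g_def k_def by simp
    then show "y \<in> DY \<phi> \<and> - g y \<le> B" using yD by blast
  qed
  obtain b where b: "b \<in> DY \<phi>"
    "\<And>v. v \<in> DY \<phi> \<Longrightarrow> - g b + (dist b yz)^2/(2*\<tau>) + (1/\<tau>+lam)/2*(dist b v)^2 \<le> - g v + (dist v yz)^2/(2*\<tau>)"
    using exist_min[OF subg cvg adm DYne, of yz] by blast
  have hmax: "g v - (dist v yz)^2/(2*\<tau>) \<le> g b - (dist b yz)^2/(2*\<tau>)" if "v \<in> DY \<phi>" for v
  proof -
    have "0 \<le> (1/\<tau>+lam)/2*(dist b v)^2" using tp unfolding \<mu>_def by simp
    then show ?thesis using b(2)[OF that] by linarith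
  qed
  define a where "a = A b"
  have aD: "a \<in> DX \<phi>" unfolding a_def using AD b(1) by blast
  define S where "S = PP \<phi> \<tau> xz yz a b"
  have Sg: "S = g b - (dist b yz)^2/(2*\<tau>)" unfolding S_def PPk g_def a_def ..
  have c3: "S + \<mu>/2 * (dist a v)^2 \<le> PP \<phi> \<tau> xz yz v b" if "v \<in> DX \<phi>" for v
    using Agr[OF b(1) that] unfolding S_def PPk a_def by linarith
  have sx: "S \<le> PP \<phi> \<tau> xz yz v b" if "v \<in> DX \<phi>" for v
  proof -
    have "0 \<le> \<mu>/2 * (dist a v)^2" using tp by simp
    then show ?thesis using c3[OF that] by linarith
  qed
  have sy: "PP \<phi> \<tau> xz yz a y1 \<le> S" if y1: "y1 \<in> DY \<phi>" for y1
  proof -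
    obtain \<gamma> \<sigma> where sg: "\<sigma> 0 = b" "\<sigma> 1 = y1"
      "\<And>t. t\<in>{0..1} \<Longrightarrow> \<sigma> t \<in> DY \<phi>"
      "\<And>\<tau> t x'. tau_adm lam \<tau> \<Longrightarrow> t\<in>{0..1} \<Longrightarrow> x' \<in> DX \<phi> \<Longrightarrow>
         (1-t) * PP \<phi> \<tau> xz yz x' b + t * PP \<phi> \<tau> xz yz x' y1 + (1/\<tau>+lam)/2*t*(1-t)*(dist b y1)^2
            \<le> PP \<phi> \<tau> xz yz x' (\<sigma> t)"
      using A2_real[OF aD aD b(1) y1, of xz yz] by metis
    define tt where "tt n = inverse (real (Suc (Suc n)))" for n
    have ttp: "0 < tt n" "tt n \<le> 1/2" "tt n \<in> {0..1}" for n
    proof -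
      show "0 < tt n" unfolding tt_def by simp
      have "inverse (real (Suc (Suc n))) \<le> inverse 2" by (rule le_imp_inverse_le) auto
      then show "tt n \<le> 1/2" unfolding tt_def by (simp add: inverse_eq_divide)
      then show "tt n \<in> {0..1}" using \<open>0 < tt n\<close> by simp
    qed
    have ttl: "tt \<longlonglongrightarrow> 0" unfolding tt_def using LIMSEQ_Suc[OF LIMSEQ_inverse_real_of_nat] .
    define xs where "xs n = A (\<sigma> (tt n))" for n
    have xsD: "xs n \<in> DX \<phi>" for n unfolding xs_def using AD sg(3)[OF ttp(3)] by blast
    define H1 where "H1 = g y1 - (dist y1 yz)^2/(2*\<tau>)"
    have R: "PP \<phi> \<tau> xz yz (xs n) y1 \<le> S \<and> \<mu>/2 * (dist a (xs n))^2 \<le> 2 * tt n * (S - H1)" for n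
    proof -
      have h1: "(1 - tt n) * PP \<phi> \<tau> xz yz (xs n) b + tt n * PP \<phi> \<tau> xz yz (xs n) y1 \<le> PP \<phi> \<tau> xz yz (xs n) (\<sigma> (tt n))"
      proof -
        have "0 \<le> (1/\<tau>+lam)/2*tt n*(1-tt n)*(dist b y1)^2" using tp ttp[of n] unfolding \<mu>_def by simp
        then show ?thesis using sg(4)[OF adm ttp(3)[of n] xsD[of n]] by linarith
      qed
      have h2: "PP \<phi> \<tau> xz yz (xs n) (\<sigma> (tt n)) \<le> S"
        using hmax[OF sg(3)[OF ttp(3)]] unfolding Sg PPk xs_def g_def by simp
      have h4: "H1 \<le> PP \<phi> \<tau> xz yz (xs n) y1" using gmin[OF y1 xsD[of n]] unfolding H1_def PPk by linarith
      have m0: "0 \<le> \<mu>/2 * (dist a (xs n))^2" using tp by simp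
      show ?thesis using arith_seq[OF h1 h2 c3[OF xsD[of n]] h4 ttp(1,2) m0] by blast
    qed
    have d2: "(\<lambda>n. (dist (xs n) a)^2) \<longlonglongrightarrow> 0"
    proof (rule tendsto_sandwich[OF _ _ tendsto_const])
      show "\<forall>\<^sub>F n in sequentially. 0 \<le> (dist (xs n) a)^2" by simp
      show "\<forall>\<^sub>F n in sequentially. (dist (xs n) a)^2 \<le> (4*(S - H1)/\<mu>) * tt n"
      proof (intro always_eventually allI)
        fix n
        have "\<mu> * (dist a (xs n))^2 \<le> 4 * (tt n * (S - H1))" using R[of n] by (simp add: algebra_simps)
        then have "(dist a (xs n))^2 \<le> 4 * (tt n * (S - H1)) / \<mu>" using tp by (simp add: field_simps)
        then show "(dist (xs n) a)^2 \<le> (4*(S - H1)/\<mu>) * tt n" by (simp add: dist_commute field_simps)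
      qed
      show "(\<lambda>n. (4*(S - H1)/\<mu>) * tt n) \<longlonglongrightarrow> 0"
        using tendsto_mult_right_zero[OF ttl, of "4*(S - H1)/\<mu>"] .
    qed
    have "(\<lambda>n. dist (xs n) a) \<longlonglongrightarrow> 0"
    proof -
      have "(\<lambda>n. sqrt ((dist (xs n) a)^2)) \<longlonglongrightarrow> sqrt 0" by (intro tendsto_real_sqrt d2)
      then show ?thesis by simp
    qed
    then have xsa: "xs \<longlonglongrightarrow> a" using tendsto_dist_iff by blast
    have cc: "(\<lambda>n. (dist (xs n) xz)^2/(2*\<tau>) - (dist y1 yz)^2/(2*\<tau>)) \<longlonglongrightarrow> (dist a xz)^2/(2*\<tau>) - (dist y1 yz)^2/(2*\<tau>)"
      using tp by (intro tendsto_intros xsa) auto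
    have bd: "fr \<phi> (xs n) y1 + ((dist (xs n) xz)^2/(2*\<tau>) - (dist y1 yz)^2/(2*\<tau>)) \<le> S" if "n \<ge> 0" for n
      using R[of n] unfolding PP_split by linarith
    have "fr \<phi> a y1 + ((dist a xz)^2/(2*\<tau>) - (dist y1 yz)^2/(2*\<tau>)) \<le> S"
      using sub_lim[OF sub_x[OF y1] xsD xsa cc bd] by blast
    then show ?thesis unfolding PP_split by linarith
  qed
  have "saddle_point (Phi \<phi> \<tau> xz yz) a b"
    unfolding saddle_point_def
  proof (intro allI conjI)
    fix x' y'
    have pab: "Phi \<phi> \<tau> xz yz a b = ereal S" unfolding S_def using Phi_eq[OF aD b(1)] .
    show "Phi \<phi> \<tau> xz yz a y' \<le> Phi \<phi> \<tau> xz yz a b"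
    proof (cases "y' \<in> DY \<phi>")
      case True then show ?thesis unfolding pab Phi_eq[OF aD True] using sy[OF True] by simp
    next
      case False then show ?thesis unfolding Phi_def using notDY[OF aD False] by simp
    qed
    show "Phi \<phi> \<tau> xz yz a b \<le> Phi \<phi> \<tau> xz yz x' b"
    proof (cases "x' \<in> DX \<phi>")
      case True then show ?thesis unfolding pab Phi_eq[OF True b(1)] using sx[OF True] by simp
    next
      case False then show ?thesis unfolding Phi_def using notDX[OF False b(1)] by simp
    qed
  qed
  then show ?thesis by blast
qed

end

lemma sq_tri:
  fixes p1 p2 dd :: real assumes "0 \<le> p1" "0 \<le> p2" "0 \<le> dd" "p1 \<le> p2 + dd"
  shows "p1^2 - p2^2 \<le> dd * (2*p2 + dd)"
proof -
  have "p1^2 \<le> (p2 + dd)^2" using assms by (simp add: power_mono)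
  also have "(p2+dd)^2 = p2^2 + dd * (2*p2 + dd)" by (simp add: power2_eq_square algebra_simps)
  finally show ?thesis by linarith
qed

lemma dist_sq_diff:
  "(dist p x)^2 - (dist p x2)^2 \<le> dist x x2 * (2 * dist p x2 + dist x x2)"
proof (rule sq_tri)
  have "dist p x \<le> dist p x2 + dist x2 x" by (rule dist_triangle)
  then show "dist p x \<le> dist p x2 + dist x x2" by (simp add: dist_commute)
qed auto

context SP begin

lemma saddle_real:
  assumes sp: "saddle_point (Phi \<phi> \<tau> x y) p q"
  shows "p \<in> DX \<phi>" "q \<in> DY \<phi>" "\<And>x'. x' \<in> DX \<phi> \<Longrightarrow> PP \<phi> \<tau> x y p q \<le> PP \<phi> \<tau> x y x' q"
    "\<And>y'. y' \<in> DY \<phi> \<Longrightarrow> PP \<phi> \<tau> x y p y' \<le> PP \<phi> \<tau> x y p q"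
proof -
  have s: "Phi \<phi> \<tau> x y p y' \<le> Phi \<phi> \<tau> x y p q" "Phi \<phi> \<tau> x y p q \<le> Phi \<phi> \<tau> x y x' q" for x' y'
    using sp unfolding saddle_point_def by auto
  obtain x0 where x0: "x0 \<in> DX \<phi>" using DXne by blast
  obtain y0 where y0: "y0 \<in> DY \<phi>" using DYne by blast
  show pD: "p \<in> DX \<phi>"
  proof (rule ccontr)
    assume "p \<notin> DX \<phi>"
    then obtain y' where "\<not> \<phi> p y' < \<infinity>" unfolding DX_def by blast
    then have "\<phi> p y' = \<infinity>" by (cases "\<phi> p y'") auto
    then have "Phi \<phi> \<tau> x y p y' = \<infinity>" unfolding Phi_def by simp
    then have "Phi \<phi> \<tau> x y p q = \<infinity>" using s(1)[of y'] by simp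
    then have "\<infinity> \<le> \<phi> x0 q + ereal ((dist x0 x ^ 2 - dist q y ^ 2) / (2 * \<tau>))"
      using s(2)[of x0] unfolding Phi_def by simp
    then have "\<phi> x0 q = \<infinity>" by (cases "\<phi> x0 q") auto
    then show False using x0 unfolding DX_def by auto
  qed
  show qD: "q \<in> DY \<phi>"
  proof (rule ccontr)
    assume "q \<notin> DY \<phi>"
    then obtain x' where "\<not> \<phi> x' q > -\<infinity>" unfolding DY_def by blast
    then have "\<phi> x' q = -\<infinity>" by (simp add: not_less)
    then have "Phi \<phi> \<tau> x y x' q = -\<infinity>" unfolding Phi_def by simp
    then have "Phi \<phi> \<tau> x y p q = -\<infinity>" using s(2)[of x'] by simp
    then have "\<phi> p y0 + ereal ((dist p x ^ 2 - dist y0 y ^ 2) / (2 * \<tau>)) \<le> -\<infinity>"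
      using s(1)[of y0] unfolding Phi_def by simp
    then have "\<phi> p y0 = -\<infinity>" by (cases "\<phi> p y0") auto
    then show False using y0 unfolding DY_def by auto
  qed
  show "PP \<phi> \<tau> x y p q \<le> PP \<phi> \<tau> x y x' q" if "x' \<in> DX \<phi>" for x'
    using s(2)[of x'] unfolding Phi_eq[OF pD qD] Phi_eq[OF that qD] by simp
  show "PP \<phi> \<tau> x y p y' \<le> PP \<phi> \<tau> x y p q" if "y' \<in> DY \<phi>" for y'
    using s(1)[of y'] unfolding Phi_eq[OF pD qD] Phi_eq[OF pD that] by simp
qed

lemma estimate:
  assumes adm: "tau_adm lam \<tau>" and s1: "saddle_point (Phi \<phi> \<tau> x y) a b"
    and s2: "saddle_point (Phi \<phi> \<tau> x2 y2) a2 b2"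
  shows "2 * \<tau> * (1/\<tau>+lam) * ((dist a a2)^2 + (dist b b2)^2) \<le>
    ((dist a2 x)^2 - (dist a2 x2)^2) + ((dist a x2)^2 - (dist a x)^2)
    + ((dist b2 y)^2 - (dist b2 y2)^2) + ((dist b y2)^2 - (dist b y)^2)"
proof -
  note r1 = saddle_real[OF s1] and r2 = saddle_real[OF s2]
  have tp: "0 < \<tau>" using adm unfolding tau_adm_iff by simp
  have g1: "fr \<phi> a b + (dist a x)^2/(2*\<tau>) + (1/\<tau>+lam)/2 * (dist a a2)^2 \<le> fr \<phi> a2 b + (dist a2 x)^2/(2*\<tau>)"
  proof (rule growth[OF cvx_x[OF r1(2)] adm r1(1) _ r2(1)])
    fix v assume "v \<in> DX \<phi>" then show "fr \<phi> a b + (dist a x)^2/(2*\<tau>) \<le> fr \<phi> v b + (dist v x)^2/(2*\<tau>)"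
      using r1(3) unfolding PP_split by fastforce
  qed
  have g2: "- fr \<phi> a b + (dist b y)^2/(2*\<tau>) + (1/\<tau>+lam)/2 * (dist b b2)^2 \<le> - fr \<phi> a b2 + (dist b2 y)^2/(2*\<tau>)"
  proof (rule growth[OF cvx_y[OF r1(1)] adm r1(2) _ r2(2)])
    fix v assume "v \<in> DY \<phi>" then show "- fr \<phi> a b + (dist b y)^2/(2*\<tau>) \<le> - fr \<phi> a v + (dist v y)^2/(2*\<tau>)"
      using r1(4) unfolding PP_split by fastforce
  qed
  have g3: "fr \<phi> a2 b2 + (dist a2 x2)^2/(2*\<tau>) + (1/\<tau>+lam)/2 * (dist a2 a)^2 \<le> fr \<phi> a b2 + (dist a x2)^2/(2*\<tau>)"
  proof (rule growth[OF cvx_x[OF r2(2)] adm r2(1) _ r1(1)])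
    fix v assume "v \<in> DX \<phi>" then show "fr \<phi> a2 b2 + (dist a2 x2)^2/(2*\<tau>) \<le> fr \<phi> v b2 + (dist v x2)^2/(2*\<tau>)"
      using r2(3) unfolding PP_split by fastforce
  qed
  have g4: "- fr \<phi> a2 b2 + (dist b2 y2)^2/(2*\<tau>) + (1/\<tau>+lam)/2 * (dist b2 b)^2 \<le> - fr \<phi> a2 b + (dist b y2)^2/(2*\<tau>)"
  proof (rule growth[OF cvx_y[OF r2(1)] adm r2(2) _ r1(2)])
    fix v assume "v \<in> DY \<phi>" then show "- fr \<phi> a2 b2 + (dist b2 y2)^2/(2*\<tau>) \<le> - fr \<phi> a2 v + (dist v y2)^2/(2*\<tau>)"
      using r2(4) unfolding PP_split by fastforce
  qed
  define M where "M = (1/\<tau>+lam)/2 * (dist a a2)^2 + (1/\<tau>+lam)/2 * (dist b b2)^2"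
  have "M + M \<le> (dist a2 x)^2/(2*\<tau>) - (dist a2 x2)^2/(2*\<tau>) + (dist a x2)^2/(2*\<tau>) - (dist a x)^2/(2*\<tau>)
    + (dist b2 y)^2/(2*\<tau>) - (dist b2 y2)^2/(2*\<tau>) + (dist b y2)^2/(2*\<tau>) - (dist b y)^2/(2*\<tau>)"
    using g1 g2 g3 g4 unfolding M_def by (simp add: dist_commute)
  also have "\<dots> = (((dist a2 x)^2 - (dist a2 x2)^2) + ((dist a x2)^2 - (dist a x)^2)
    + ((dist b2 y)^2 - (dist b2 y2)^2) + ((dist b y2)^2 - (dist b y)^2)) / (2*\<tau>)"
    by (simp add: add_divide_distrib diff_divide_distrib)
  finally have fin: "2*\<tau>*(M + M) \<le> ((dist a2 x)^2 - (dist a2 x2)^2) + ((dist a x2)^2 - (dist a x)^2)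
    + ((dist b2 y)^2 - (dist b2 y2)^2) + ((dist b y2)^2 - (dist b y)^2)"
    using tp by (simp add: pos_le_divide_eq mult.commute)
  have eqM: "M + M = (1/\<tau>+lam) * ((dist a a2)^2 + (dist b b2)^2)"
    unfolding M_def by (simp add: algebra_simps)
  show ?thesis using fin unfolding eqM by (simp add: mult.assoc)
qed

end

context SP begin

lemma resolvent_saddle:
  assumes adm: "tau_adm lam \<tau>"
  shows "saddle_point (Phi \<phi> \<tau> (fst z) (snd z)) (fst (resolvent \<phi> \<tau> z)) (snd (resolvent \<phi> \<tau> z))"
proof -
  obtain a b where ab: "saddle_point (Phi \<phi> \<tau> (fst z) (snd z)) a b" using exist_saddle[OF adm] by blast
  have cp: "0 < 2 * \<tau> * (1/\<tau>+lam)" using adm unfolding tau_adm_iff by simp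
  have uniq: "p = a \<and> q = b" if s: "saddle_point (Phi \<phi> \<tau> (fst z) (snd z)) p q" for p q
  proof -
    have "2 * \<tau> * (1/\<tau>+lam) * ((dist a p)^2 + (dist b q)^2) \<le> 0"
      using estimate[OF adm ab s] by simp
    then have "2 * \<tau> * (1/\<tau>+lam) * ((dist a p)^2 + (dist b q)^2) \<le> 2 * \<tau> * (1/\<tau>+lam) * 0" by simp
    then have "(dist a p)^2 + (dist b q)^2 \<le> 0" using mult_le_cancel_left_pos[OF cp] by blast
    then have "(dist a p)^2 \<le> 0" "(dist b q)^2 \<le> 0"
      using zero_le_power2[of "dist a p"] zero_le_power2[of "dist b q"] by linarith+
    then have "dist a p = 0" "dist b q = 0" by simp_all
    then show ?thesis by simp
  qed
  have ex1: "\<exists>!p. saddle_point (Phi \<phi> \<tau> (fst z) (snd z)) (fst p) (snd p)"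
  proof (rule ex1I[of _ "(a, b)"])
    show "saddle_point (Phi \<phi> \<tau> (fst z) (snd z)) (fst (a, b)) (snd (a, b))" using ab by simp
    fix p assume "saddle_point (Phi \<phi> \<tau> (fst z) (snd z)) (fst p) (snd p)"
    then have "fst p = a" "snd p = b" using uniq by blast+
    then show "p = (a, b)" by (simp add: prod_eq_iff)
  qed
  show ?thesis unfolding resolvent_def using theI'[OF ex1] .
qed

lemma resolvent_cont:
  assumes adm: "tau_adm lam \<tau>"
  shows "continuous_on UNIV (resolvent \<phi> \<tau>)"
  unfolding continuous_on_iff
proof (intro ballI allI impI)
  fix z :: "'a \<times> 'b" and e :: real assume e: "0 < e"
  obtain x y where z: "z = (x, y)" by fastforce
  define a where "a = fst (resolvent \<phi> \<tau> z)"
  define b where "b = snd (resolvent \<phi> \<tau> z)"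
  have sz: "saddle_point (Phi \<phi> \<tau> x y) a b" using resolvent_saddle[OF adm, of z] unfolding a_def b_def z by simp
  define R where "R = dist a x + dist b y"
  have R0: "0 \<le> R" unfolding R_def by simp
  define c where "c = \<tau> * (1/\<tau>+lam)"
  have tp: "0 < \<tau>" using adm unfolding tau_adm_iff by simp
  have cp: "0 < c" using adm unfolding tau_adm_iff c_def by simp
  define \<delta> where "\<delta> = min 1 (min (c/2) (e^2*c/(2*(8*R+10))))"
  have dp: "0 < \<delta>" unfolding \<delta>_def using cp e R0 by simp
  show "\<exists>d>0. \<forall>w\<in>UNIV. dist w z < d \<longrightarrow> dist (resolvent \<phi> \<tau> w) (resolvent \<phi> \<tau> z) < e"
  proof (intro exI conjI ballI impI)
    show "0 < \<delta>" by (rule dp)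
    fix w :: "'a \<times> 'b" assume wz: "dist w z < \<delta>"
    obtain x2 y2 where w: "w = (x2, y2)" by fastforce
    define a2 where "a2 = fst (resolvent \<phi> \<tau> w)"
    define b2 where "b2 = snd (resolvent \<phi> \<tau> w)"
    have sw: "saddle_point (Phi \<phi> \<tau> x2 y2) a2 b2" using resolvent_saddle[OF adm, of w] unfolding a2_def b2_def w by simp
    define \<epsilon> where "\<epsilon> = dist w z"
    define D where "D = dist (resolvent \<phi> \<tau> w) (resolvent \<phi> \<tau> z)"
    have eps: "\<epsilon> < \<delta>" "0 \<le> \<epsilon>" using wz unfolding \<epsilon>_def by auto
    have e1: "\<epsilon> \<le> 1" "\<epsilon> \<le> c/2" "\<epsilon> < e^2*c/(2*(8*R+10))" using eps unfolding \<delta>_def by auto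
    have De: "\<epsilon> = sqrt ((dist x2 x)^2 + (dist y2 y)^2)" unfolding \<epsilon>_def w z by (simp add: dist_prod_def)
    have dx: "dist x x2 \<le> \<epsilon>" unfolding De by (simp add: dist_commute real_sqrt_sum_squares_ge1)
    have dy: "dist y y2 \<le> \<epsilon>" unfolding De by (simp add: dist_commute real_sqrt_sum_squares_ge2)
    have DD: "D = sqrt ((dist a2 a)^2 + (dist b2 b)^2)" unfolding D_def a_def b_def a2_def b2_def
      by (simp add: dist_prod_def)
    have D0: "0 \<le> D" unfolding D_def by simp
    have D2: "D^2 = (dist a a2)^2 + (dist b b2)^2" unfolding DD by (simp add: dist_commute)
    have daa: "dist a2 a \<le> D" unfolding DD by (simp add: real_sqrt_sum_squares_ge1)
    have dbb: "dist b2 b \<le> D" unfolding DD by (simp add: real_sqrt_sum_squares_ge2)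
    have est: "2 * c * D^2 \<le> ((dist a2 x)^2 - (dist a2 x2)^2) + ((dist a x2)^2 - (dist a x)^2)
      + ((dist b2 y)^2 - (dist b2 y2)^2) + ((dist b y2)^2 - (dist b y)^2)"
      using estimate[OF adm sz sw] unfolding D2 c_def by (simp add: mult.assoc)
    have T1: "(dist a2 x)^2 - (dist a2 x2)^2 \<le> \<epsilon> * (2*(D + R + \<epsilon>) + \<epsilon>)"
    proof -
      have "dist a2 x2 \<le> dist a2 a + dist a x + dist x x2"
        by (metis add_mono_thms_linordered_semiring(3) dist_triangle order_trans)
      then have "dist a2 x2 \<le> D + R + \<epsilon>" using daa dx zero_le_dist[of b y] unfolding R_def by linarith
      then have "dist x x2 * (2 * dist a2 x2 + dist x x2) \<le> \<epsilon> * (2*(D + R + \<epsilon>) + \<epsilon>)"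
        using dx eps by (intro mult_mono) auto
      then show ?thesis using dist_sq_diff[of a2 x x2] by linarith
    qed
    have T2: "(dist a x2)^2 - (dist a x)^2 \<le> \<epsilon> * (2*R + \<epsilon>)"
    proof -
      have "dist a x \<le> R" unfolding R_def by simp
      then have "dist x2 x * (2 * dist a x + dist x2 x) \<le> \<epsilon> * (2*R + \<epsilon>)"
        using dx eps by (intro mult_mono) (auto simp: dist_commute)
      then show ?thesis using dist_sq_diff[of a x2 x] by linarith
    qed
    have T3: "(dist b2 y)^2 - (dist b2 y2)^2 \<le> \<epsilon> * (2*(D + R + \<epsilon>) + \<epsilon>)"
    proof -
      have "dist b2 y2 \<le> dist b2 b + dist b y + dist y y2"
        by (metis add_mono_thms_linordered_semiring(3) dist_triangle order_trans)
      then have "dist b2 y2 \<le> D + R + \<epsilon>" using dbb dy zero_le_dist[of a x] unfolding R_def by linarith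
      then have "dist y y2 * (2 * dist b2 y2 + dist y y2) \<le> \<epsilon> * (2*(D + R + \<epsilon>) + \<epsilon>)"
        using dy eps by (intro mult_mono) auto
      then show ?thesis using dist_sq_diff[of b2 y y2] by linarith
    qed
    have T4: "(dist b y2)^2 - (dist b y)^2 \<le> \<epsilon> * (2*R + \<epsilon>)"
    proof -
      have "dist b y \<le> R" unfolding R_def by simp
      then have "dist y2 y * (2 * dist b y + dist y2 y) \<le> \<epsilon> * (2*R + \<epsilon>)"
        using dy eps by (intro mult_mono) (auto simp: dist_commute)
      then show ?thesis using dist_sq_diff[of b y2 y] by linarith
    qed
    have sum: "\<epsilon> * (2*(D + R + \<epsilon>) + \<epsilon>) + \<epsilon> * (2*R + \<epsilon>) = 2*(\<epsilon>*D) + \<epsilon>*(4*R + 4*\<epsilon>)"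
      by (simp add: algebra_simps)
    have i1: "2 * c * D^2 \<le> 4*(\<epsilon>*D) + 2*(\<epsilon>*(4*R + 4*\<epsilon>))" using est T1 T2 T3 T4 sum by linarith
    have i2: "2*(\<epsilon>*D) \<le> \<epsilon> + \<epsilon> * D^2"
    proof -
      have "2*D \<le> 1 + D^2" using sum_squares_ge_zero[of "D - 1" 0]
        by (simp add: power2_eq_square algebra_simps)
      then have "\<epsilon> * (2*D) \<le> \<epsilon> * (1 + D^2)" using eps by (simp add: mult_left_mono)
      then show ?thesis by (simp add: algebra_simps)
    qed
    have i3: "\<epsilon>*(4*R + 4*\<epsilon>) \<le> \<epsilon>*(4*R + 4)" using e1 eps by (intro mult_left_mono) auto
    have i4: "2 * (\<epsilon> * D^2) \<le> c * D^2"
    proof -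
      have "(2*\<epsilon>) * D^2 \<le> c * D^2" using e1 by (intro mult_right_mono) auto
      then show ?thesis by simp
    qed
    have i5: "c * D^2 \<le> \<epsilon> * (8*R + 10)"
    proof -
      have "\<epsilon>*(4*R + 4) * 2 + 2*\<epsilon> = \<epsilon> * (8*R + 10)" by (simp add: algebra_simps)
      then show ?thesis using i1 i2 i3 i4 by linarith
    qed
    have "\<epsilon> * (8*R + 10) < e^2 * c / 2"
    proof -
      have p: "0 < 8*R + 10" using R0 by simp
      have "\<epsilon> < e^2 * c / (2*(8*R+10))" using e1 by simp
      then have "\<epsilon> * (2*(8*R+10)) < e^2 * c" using p by (simp add: pos_less_divide_eq)
      then show ?thesis by (simp add: algebra_simps)
    qed
    then have "c * D^2 < c * e^2 / 2" using i5 by (simp add: mult.commute)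
    then have "D^2 < e^2 / 2" using cp by (simp add: field_simps)
    moreover have "0 < e^2" using e by simp
    ultimately have "D^2 < e^2" by linarith
    then show "dist (resolvent \<phi> \<tau> w) (resolvent \<phi> \<tau> z) < e"
      unfolding D_def[symmetric] using e D0 by (simp add: power_less_imp_less_base)
  qed
qed

end

theorem mainTheorem9:
  fixes \<phi> :: "'a::complete_space \<Rightarrow> 'b::complete_space \<Rightarrow> ereal" and lam \<tau> :: real
  assumes "proper_sp \<phi>" and "closed_sp \<phi>" and "A1 \<phi>" and "A2 \<phi> lam"
    and "tau_adm lam \<tau>"
  shows "continuous_on (closure (Dom \<phi>)) (resolvent \<phi> \<tau>)"
proof -
  interpret SP \<phi> lam \<tau> using assms by unfold_locales
  show ?thesis using resolvent_cont[OF assms(5)] by (rule continuous_on_subset) simp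
qed

end
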